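(* For any $p$-regular multigraph $G$ and $W\sim\mathrm{Wig}$, $\mathrm{Var}\, m_G(W)\ge n^{\underline{|E(G)|}}$.
   Context: $\mathrm{Wig}$ is the law of $W\in\mathrm{Sym}^p(\mathbb{R}^n)$ with $W_{i_1,\dots,i_p}=\frac{1}{\sqrt{p!}}\sum_{\pi\in S_p}G_{i_{\pi(1)},\dots,i_{\pi(p)}}$, $G$ with i.i.d. $\mathcal{N}(0,1)$ entries. $n^{\underline b}=n(n-1)\cdots(n-b+1)$. Multigraphs $G=(V,E)$ may have loops and parallel edges (a loop contributes 2 to the degree); for $i\in[n]^E$, $i(\partial v)$ is the multiset of labels of edges at $v$ (loops twice), and $m_G(T)=\sum_{i\in[n]^E}\prod_{v\in V}T_{i(\partial v)}$. *)

theory Defs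
  imports "HOL-Probability.Probability" "HOL-Library.Multiset" "HOL-Combinatorics.Permutations"
begin

definition tidx :: "nat \<Rightarrow> nat \<Rightarrow> nat list set" where
  "tidx n p = {xs. length xs = p \<and> set xs \<subseteq> {..<n}}"

definition gauss_tensor :: "nat \<Rightarrow> nat \<Rightarrow> (nat list \<Rightarrow> real) measure" where
  "gauss_tensor n p = PiM (tidx n p) (\<lambda>_. std_normal_distribution)"

text \<open>The symmetrisation map G \<mapsto> W, so that W ~ Wig when G ~ gauss_tensor.\<close>
definition wig :: "nat \<Rightarrow> (nat list \<Rightarrow> real) \<Rightarrow> nat list \<Rightarrow> real" where
  "wig p G xs = (1 / sqrt (fact p)) *
     (\<Sum>\<pi> \<in> {\<pi>. \<pi> permutes {..<p}}. G (map (\<lambda>k. xs ! \<pi> k) [0..<p]))"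

text \<open>Multigraph: finite vertex set V, finite edge set E, each edge has a 2-element
  multiset of endpoints in V (a loop at v is {#v,v#}).\<close>
definition multigraph :: "'v set \<Rightarrow> 'e set \<Rightarrow> ('e \<Rightarrow> 'v multiset) \<Rightarrow> bool" where
  "multigraph V E ends \<longleftrightarrow> finite V \<and> finite E \<and>
     (\<forall>e\<in>E. size (ends e) = 2 \<and> set_mset (ends e) \<subseteq> V)"

definition mdegree :: "'e set \<Rightarrow> ('e \<Rightarrow> 'v multiset) \<Rightarrow> 'v \<Rightarrow> nat" where
  "mdegree E ends v = (\<Sum>e\<in>E. count (ends e) v)"

definition regular :: "nat \<Rightarrow> 'v set \<Rightarrow> 'e set \<Rightarrow> ('e \<Rightarrow> 'v multiset) \<Rightarrow> bool" where
  "regular p V E ends \<longleftrightarrow> multigraph V E ends \<and> (\<forall>v\<in>V. mdegree E ends v = p)"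

text \<open>i(\<partial>v): multiset of labels of edges at v (loops counted twice).\<close>
definition labels_at :: "'e set \<Rightarrow> ('e \<Rightarrow> 'v multiset) \<Rightarrow> ('e \<Rightarrow> nat) \<Rightarrow> 'v \<Rightarrow> nat multiset" where
  "labels_at E ends i v = (\<Sum>e\<in>E. replicate_mset (count (ends e) v) (i e))"

text \<open>m_G(T); T_M for a multiset M is T evaluated at the sorted list of M
  (well defined for symmetric T).\<close>
definition mG :: "nat \<Rightarrow> 'v set \<Rightarrow> 'e set \<Rightarrow> ('e \<Rightarrow> 'v multiset) \<Rightarrow> (nat list \<Rightarrow> real) \<Rightarrow> real" where
  "mG n V E ends T = (\<Sum>i \<in> PiE E (\<lambda>_. {..<n}).
      \<Prod>v\<in>V. T (sorted_list_of_multiset (labels_at E ends i v)))"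

definition Var :: "'a measure \<Rightarrow> ('a \<Rightarrow> real) \<Rightarrow> real" where
  "Var M X = integral\<^sup>L M (\<lambda>x. (X x - integral\<^sup>L M X)\<^sup>2)"

definition falling :: "nat \<Rightarrow> nat \<Rightarrow> real" where
  "falling n b = (\<Prod>k<b. real n - real k)"

end

theory Submission
  imports Defs
begin


fun dm :: "nat \<Rightarrow> real" where
  "dm 0 = 1" | "dm (Suc 0) = 0" | "dm (Suc (Suc k)) = (real k + 1) * dm k"

lemma dm_even: "dm (2*j) = fact (2*j) / (2^j * fact j)"
proof (induction j)
  case 0 then show ?case by simp
next
  case (Suc j)
  have e: "2 * Suc j = Suc (Suc (2*j))" by simp
  have "dm (2 * Suc j) = (2*real j + 1) * dm (2*j)"
    unfolding e by simp
  also have "\<dots> = (2*real j + 1) * (fact (2*j) / (2^j * fact j))" using Suc by simp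
  also have "\<dots> = fact (2 * Suc j) / (2 ^ Suc j * fact (Suc j))"
  proof -
    have f1: "(fact (2 * Suc j)::real) = (2*real j+2)*(2*real j+1)*fact(2*j)"
      unfolding e fact_Suc by (simp add: algebra_simps)
    have f2: "(fact (Suc j)::real) = (real j + 1) * fact j" unfolding fact_Suc by simp
    have p: "(fact j::real) > 0" "(2::real)^j > 0" by auto
    show ?thesis unfolding f1 f2 using p by (simp add: divide_simps)
  qed
  finally show ?case .
qed
lemma dm_odd: "dm (2*j+1) = 0"
proof (induction j)
  case 0 then show ?case by simp
next
  case (Suc j)
  have e: "2*Suc j+1 = Suc (Suc (2*j+1))" by simp
  show ?case unfolding e using Suc by simp
qed

lemma mm_dm: "integral\<^sup>L std_normal_distribution (\<lambda>x. x^k) = dm k"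
proof (cases "even k")
  case True
  then obtain j where "k = 2*j" by auto
  then show ?thesis using std_normal_distribution_even_moments(1)[of j] dm_even[of j] by simp
next
  case False
  then obtain j where "k = 2*j+1" using oddE by blast
  then show ?thesis using integral_std_normal_distribution_moment_odd[of k] dm_odd[of j] by simp
qed

lemma dm_nonneg: "dm k \<ge> 0"
proof (induction k rule: dm.induct)
  case (3 k) then show ?case by simp
qed simp_all

lemma dm_even_ge1: "dm (2*j) \<ge> 1"
proof (induction j)
  case 0 then show ?case by simp
next
  case (Suc j)
  have e: "2 * Suc j = Suc (Suc (2*j))" by simp
  have "dm (2 * Suc j) = (2*real j + 1) * dm (2*j)" unfolding e by simp
  moreover have "1 * 1 \<le> (2*real j + 1) * dm (2*j)"
    by (rule mult_mono) (use Suc in simp_all)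
  ultimately show ?case by simp
qed

lemma dm_super: "dm a * dm b \<le> dm (a + b)"
proof (induction a rule: dm.induct)
  case 1 then show ?case by simp
next
  case 2 then show ?case using dm_nonneg[of "Suc 0 + b"] by simp
next
  case (3 k)
  have h1: "real k + 1 \<le> real (k+b) + 1" by simp
  have h3: "0 \<le> dm k * dm b" using dm_nonneg[of k] dm_nonneg[of b] by simp
  have "(real k+1) * (dm k * dm b) \<le> (real (k+b)+1) * dm (k+b)"
    by (rule mult_mono[OF h1 3]) (use h3 in simp_all)
  moreover have e: "Suc (Suc k) + b = Suc (Suc (k+b))" by simp
  ultimately show ?case unfolding e by simp
qed

lemma dm_var: assumes "a \<ge> 1" shows "1 \<le> dm (a + a) - (dm a)^2"
proof (cases "even a")
  case False
  then obtain j where a: "a = 2*j+1" using oddE by blast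
  have "a + a = 2*a" by simp
  then show ?thesis using dm_odd[of j] dm_even_ge1[of a] a by simp
next
  case True
  define i where "i = a div 2 - 1"
  have a: "a = Suc (Suc (2*i))" using True assms unfolding i_def by presburger
  have d1: "dm a = (2*real i+1) * dm (2*i)" unfolding a by simp
  have e4: "a + a = Suc (Suc (Suc (Suc (4*i))))" using a by simp
  have d2: "dm (a+a) = (4*real i+3)*(4*real i+1) * dm (4*i)"
    unfolding e4 by (simp add: algebra_simps)
  have d3: "dm (2*i) * dm (2*i) \<le> dm (4*i)" using dm_super[of "2*i" "2*i"] by simp
  have g1: "1 \<le> dm (2*i)" by (rule dm_even_ge1)
  define D where "D = dm (2*i)"
  define r where "r = real i"
  have r0: "r \<ge> 0" unfolding r_def by simp
  have "(4*r+3)*(4*r+1) * (D*D) \<le> (4*r+3)*(4*r+1) * dm (4*i)"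
    using d3 r0 unfolding D_def by (intro mult_left_mono) simp_all
  then have "dm (a+a) - (dm a)^2 \<ge> (4*r+3)*(4*r+1) * (D*D) - (2*r+1)^2 * (D*D)"
    unfolding d1 d2 D_def r_def by (simp add: power2_eq_square algebra_simps)
  moreover have "(4*r+3)*(4*r+1) * (D*D) - (2*r+1)^2 * (D*D) = (12*r*r + 12*r + 2) * (D*D)"
    by (simp add: algebra_simps power2_eq_square)
  moreover have "1 * 1 \<le> D * D" using g1 unfolding D_def by (intro mult_mono) simp_all
  moreover have "1 * 1 \<le> (12*r*r + 12*r + 2) * (D*D)"
    using calculation(3) r0 by (intro mult_mono) simp_all
  ultimately show ?thesis by simp
qed



lemma prod_ineq:
  fixes x y :: "'i \<Rightarrow> real"
  assumes "finite I" "k0 \<in> I" "\<And>k. k \<in> I \<Longrightarrow> 0 \<le> y k \<and> y k \<le> x k"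
    "\<And>k. k \<in> I \<Longrightarrow> 1 \<le> x k" "1 \<le> x k0 - y k0"
  shows "1 \<le> prod x I - prod y I"
proof -
  define P where "P = prod x (I - {k0})"
  define Q where "Q = prod y (I - {k0})"
  have px: "prod x I = x k0 * P" unfolding P_def using assms(1,2) by (simp add: prod.remove)
  have py: "prod y I = y k0 * Q" unfolding Q_def using assms(1,2) by (simp add: prod.remove)
  have P1: "1 \<le> P" unfolding P_def using assms(4) by (intro prod_ge_1) auto
  have Q0: "0 \<le> Q" unfolding Q_def using assms(3) by (intro prod_nonneg) auto
  have QP: "Q \<le> P" unfolding P_def Q_def using assms(3) by (intro prod_mono) auto
  have y0: "0 \<le> y k0" using assms(2,3) by auto
  have "y k0 * Q \<le> y k0 * P" using QP y0 by (rule mult_left_mono)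
  moreover have "1 * 1 \<le> (x k0 - y k0) * P" using P1 assms(5) by (intro mult_mono) auto
  ultimately show ?thesis unfolding px py by (simp add: algebra_simps)
qed

lemma mono_cnt:
  assumes "finite V" "finite I" "f ` V \<subseteq> I"
  shows "(\<Prod>v\<in>V. x (f v)) = (\<Prod>k\<in>I. x k ^ card {v\<in>V. f v = k})"
proof -
  have "(\<Prod>v\<in>V. x (f v)) = (\<Prod>k\<in>I. \<Prod>v\<in>{v\<in>V. f v = k}. x (f v))"
    using prod.group[OF assms, of "\<lambda>v. x (f v)"] by simp
  also have "\<dots> = (\<Prod>k\<in>I. x k ^ card {v\<in>V. f v = k})"
    by (intro prod.cong refl) simp
  finally show ?thesis .
qed

lemma int_monom:
  fixes I :: "'i set"
  assumes "finite I"
  shows "integrable (PiM I (\<lambda>_. std_normal_distribution)) (\<lambda>x. \<Prod>k\<in>I. x k ^ a k)"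
    and "integral\<^sup>L (PiM I (\<lambda>_. std_normal_distribution)) (\<lambda>x. \<Prod>k\<in>I. x k ^ a k) = (\<Prod>k\<in>I. dm (a k))"
proof -
  interpret PP: product_prob_space "\<lambda>_::'i. std_normal_distribution" I
  proof -
    have ps: "prob_space (std_normal_distribution)" by (rule prob_space_normal_density) simp
    show "product_prob_space (\<lambda>_::'i. std_normal_distribution)"
      unfolding product_prob_space_def product_prob_space_axioms_def product_sigma_finite_def
      using ps prob_space_imp_sigma_finite by blast
  qed
  show "integrable (PiM I (\<lambda>_. std_normal_distribution)) (\<lambda>x. \<Prod>k\<in>I. x k ^ a k)"
    using PP.product_integrable_prod[OF assms, of "\<lambda>k y. y ^ a k"]
    by (simp add: integrable_std_normal_distribution_moment)
  show "integral\<^sup>L (PiM I (\<lambda>_. std_normal_distribution)) (\<lambda>x. \<Prod>k\<in>I. x k ^ a k) = (\<Prod>k\<in>I. dm (a k))"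
    using PP.product_integral_prod[OF assms, of "\<lambda>k y. y ^ a k"]
    by (simp add: integrable_std_normal_distribution_moment mm_dm)
qed



lemma core:
  fixes I :: "'i set" and T :: "'t set" and V :: "'v set" and f :: "'t \<Rightarrow> 'v \<Rightarrow> 'i" and c :: real
  assumes fI: "finite I" and fT: "finite T" and fV: "finite V" and Vne: "V \<noteq> {}"
    and fin: "\<And>t v. t \<in> T \<Longrightarrow> v \<in> V \<Longrightarrow> f t v \<in> I"
  shows "c^2 * real (card T) \<le> Var (PiM I (\<lambda>_. std_normal_distribution)) (\<lambda>x. \<Sum>t\<in>T. c * (\<Prod>v\<in>V. x (f t v)))"
proof -
  define M where "M = PiM I (\<lambda>_::'i. std_normal_distribution)"
  interpret M: prob_space M unfolding M_def
    by (rule prob_space_PiM) (rule prob_space_normal_density, simp)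
  define e where "e t k = card {v\<in>V. f t v = k}" for t k
  define X where "X x = (\<Sum>t\<in>T. c * (\<Prod>v\<in>V. x (f t v)))" for x :: "'i \<Rightarrow> real"
  have mono: "(\<Prod>v\<in>V. x (f t v)) = (\<Prod>k\<in>I. x k ^ e t k)" if "t \<in> T" for t x
    unfolding e_def using fin[OF that] by (intro mono_cnt fV fI) auto
  have Xe: "X x = (\<Sum>t\<in>T. c * (\<Prod>k\<in>I. x k ^ e t k))" for x
    unfolding X_def by (intro sum.cong refl arg_cong[where f="\<lambda>y. c*y"] mono)
  have X2: "(X x)^2 = (\<Sum>t\<in>T. \<Sum>s\<in>T. c^2 * (\<Prod>k\<in>I. x k ^ (e t k + e s k)))" for x
    unfolding Xe power2_eq_square sum_product
    by (intro sum.cong refl) (simp add: power_add prod.distrib algebra_simps)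
  have im: "integrable M (\<lambda>x. \<Prod>k\<in>I. x k ^ a k)" for a
    unfolding M_def by (rule int_monom(1)[OF fI])
  have em: "integral\<^sup>L M (\<lambda>x. \<Prod>k\<in>I. x k ^ a k) = (\<Prod>k\<in>I. dm (a k))" for a
    unfolding M_def by (rule int_monom(2)[OF fI])
  have iX: "integrable M X" unfolding Xe[abs_def] using im by auto
  have iX2: "integrable M (\<lambda>x. (X x)^2)" unfolding X2 using im by auto
  have eX: "M.expectation X = (\<Sum>t\<in>T. c * (\<Prod>k\<in>I. dm (e t k)))"
    unfolding Xe[abs_def] using im em by (simp add: integral_sum)
  have eX2: "M.expectation (\<lambda>x. (X x)^2) = (\<Sum>t\<in>T. \<Sum>s\<in>T. c^2 * (\<Prod>k\<in>I. dm (e t k + e s k)))"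
    unfolding X2 using im em by (simp add: integral_sum)
  define D where "D t s = (\<Prod>k\<in>I. dm (e t k + e s k)) - (\<Prod>k\<in>I. dm (e t k)) * (\<Prod>k\<in>I. dm (e s k))" for t s
  have eXsq: "(M.expectation X)^2 = (\<Sum>t\<in>T. \<Sum>s\<in>T. c^2 * ((\<Prod>k\<in>I. dm (e t k)) * (\<Prod>k\<in>I. dm (e s k))))"
    unfolding eX power2_eq_square sum_product by (intro sum.cong refl) (simp add: algebra_simps)
  have "Var M X = M.variance X" by (simp add: Var_def)
  also have "\<dots> = M.expectation (\<lambda>x. (X x)^2) - (M.expectation X)^2"
    by (rule M.variance_eq[OF iX iX2])
  also have "\<dots> = c^2 * (\<Sum>t\<in>T. \<Sum>s\<in>T. D t s)"
    unfolding eX2 eXsq D_def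
    by (simp add: sum_subtractf[symmetric] sum_distrib_left right_diff_distrib)
  finally have var: "Var M X = c^2 * (\<Sum>t\<in>T. \<Sum>s\<in>T. D t s)" .
  have Dnn: "0 \<le> D t s" for t s
  proof -
    have "(\<Prod>k\<in>I. dm (e t k)) * (\<Prod>k\<in>I. dm (e s k)) = (\<Prod>k\<in>I. dm (e t k) * dm (e s k))"
      by (simp add: prod.distrib)
    also have "\<dots> \<le> (\<Prod>k\<in>I. dm (e t k + e s k))"
      by (intro prod_mono) (auto simp: dm_super dm_nonneg)
    finally show ?thesis unfolding D_def by simp
  qed
  have Dd: "1 \<le> D t t" if "t \<in> T" for t
  proof -
    obtain v where v: "v \<in> V" using Vne by auto
    define k0 where "k0 = f t v"
    have k0: "k0 \<in> I" unfolding k0_def using fin[OF that v] .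
    have "e t k0 \<ge> 1" unfolding e_def k0_def using fV v
      by (metis (mono_tags, lifting) One_nat_def Suc_leI card_gt_0_iff empty_iff finite_subset mem_Collect_eq subsetI)
    have sq: "(\<Prod>k\<in>I. dm (e t k)) * (\<Prod>k\<in>I. dm (e t k)) = (\<Prod>k\<in>I. (dm (e t k))^2)"
      by (simp add: prod.distrib power2_eq_square)
    have "1 \<le> (\<Prod>k\<in>I. dm (e t k + e t k)) - (\<Prod>k\<in>I. (dm (e t k))^2)"
    proof (rule prod_ineq[OF fI k0])
      fix k assume "k \<in> I"
      show "0 \<le> (dm (e t k))^2 \<and> (dm (e t k))^2 \<le> dm (e t k + e t k)"
        using dm_super[of "e t k" "e t k"] by (simp add: power2_eq_square)
      show "1 \<le> dm (e t k + e t k)" using dm_even_ge1[of "e t k"] by (simp add: mult_2)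
    next
      show "1 \<le> dm (e t k0 + e t k0) - (dm (e t k0))^2" using dm_var \<open>e t k0 \<ge> 1\<close> by blast
    qed
    then show ?thesis unfolding D_def sq .
  qed
  have "real (card T) \<le> (\<Sum>t\<in>T. \<Sum>s\<in>T. D t s)"
  proof -
    have "real (card T) = (\<Sum>t\<in>T. 1)" by simp
    also have "\<dots> \<le> (\<Sum>t\<in>T. D t t)" using Dd by (intro sum_mono) auto
    also have "\<dots> \<le> (\<Sum>t\<in>T. \<Sum>s\<in>T. D t s)"
    proof (intro sum_mono)
      fix t assume t: "t \<in> T"
      show "D t t \<le> (\<Sum>s\<in>T. D t s)"
        using member_le_sum[of t T "D t"] t fT Dnn by auto
    qed
    finally show ?thesis .
  qed
  then have "c^2 * real (card T) \<le> c^2 * (\<Sum>t\<in>T. \<Sum>s\<in>T. D t s)"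
    by (intro mult_left_mono) auto
  then show ?thesis using var unfolding M_def X_def by simp
qed



lemma falling_le: "falling n b \<le> real n ^ b"
proof (cases "n < b")
  case True
  have "falling n b = 0" unfolding falling_def
    using True by (intro prod_zero) auto
  then show ?thesis by simp
next
  case False
  have "falling n b \<le> (\<Prod>k<b. real n)" unfolding falling_def
    using False by (intro prod_mono) auto
  then show ?thesis by simp
qed

lemma finite_tidx: "finite (tidx n p)"
proof -
  have "tidx n p = {xs. set xs \<subseteq> {..<n} \<and> length xs = p}" unfolding tidx_def by auto
  then show ?thesis using finite_lists_length_eq[of "{..<n}" p] by simp
qed

theorem corollary5p4:
  fixes p n :: nat and V :: "'v set" and E :: "'e set" and ends :: "'e \<Rightarrow> 'v multiset"
  assumes "regular p V E ends"
    and "V \<noteq> {}"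
  shows "Var (gauss_tensor n p) (\<lambda>G. mG n V E ends (wig p G)) \<ge> falling n (card E)"
proof -
  have fV: "finite V" and fE: "finite E" and deg: "\<And>v. v \<in> V \<Longrightarrow> mdegree E ends v = p"
    using assms(1) unfolding regular_def multigraph_def by auto
  define P where "P = {\<pi>. \<pi> permutes {..<p}}"
  have fP: "finite P" unfolding P_def by (rule finite_permutations) simp
  have cP: "card P = fact p" unfolding P_def by (rule card_permutations) simp_all
  define A where "A = PiE E (\<lambda>_. {..<n::nat})"
  have fA: "finite A" unfolding A_def using fE by (intro finite_PiE) auto
  define T where "T = Sigma A (\<lambda>i. PiE V (\<lambda>_. P))"
  have fT: "finite T" unfolding T_def using fA fV fP by (intro finite_SigmaI finite_PiE) auto
  define sl where "sl i v = sorted_list_of_multiset (labels_at E ends i v)" for i v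
  define f where "f t v = map (\<lambda>k. sl (fst t) v ! (snd t v k)) [0..<p]" for t v
  define a where "a = 1 / sqrt (fact p :: real)"
  define c where "c = a ^ card V"
  have wigeq: "wig p G (sl i v) = a * (\<Sum>\<pi>\<in>P. G (map (\<lambda>k. sl i v ! \<pi> k) [0..<p]))" for G i v
    unfolding wig_def a_def P_def by simp
  have mGeq: "mG n V E ends (wig p G) = (\<Sum>t\<in>T. c * (\<Prod>v\<in>V. G (f t v)))" for G
  proof -
    have "mG n V E ends (wig p G) = (\<Sum>i\<in>A. \<Prod>v\<in>V. a * (\<Sum>\<pi>\<in>P. G (map (\<lambda>k. sl i v ! \<pi> k) [0..<p])))"
      unfolding mG_def A_def sl_def[symmetric] wigeq by simp
    also have "\<dots> = (\<Sum>i\<in>A. c * (\<Prod>v\<in>V. \<Sum>\<pi>\<in>P. G (map (\<lambda>k. sl i v ! \<pi> k) [0..<p])))"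
      unfolding c_def by (simp add: prod.distrib)
    also have "\<dots> = (\<Sum>i\<in>A. c * (\<Sum>QQ\<in>PiE V (\<lambda>_. P). \<Prod>v\<in>V. G (map (\<lambda>k. sl i v ! QQ v k) [0..<p])))"
      using fV fP by (simp add: prod_sum_PiE)
    also have "\<dots> = (\<Sum>i\<in>A. \<Sum>QQ\<in>PiE V (\<lambda>_. P). c * (\<Prod>v\<in>V. G (f (i, QQ) v)))"
      unfolding f_def by (simp add: sum_distrib_left)
    also have "\<dots> = (\<Sum>t\<in>T. c * (\<Prod>v\<in>V. G (f t v)))"
      unfolding T_def using fA fV fP
      by (subst sum.Sigma) (auto intro!: finite_PiE sum.cong simp: case_prod_beta)
    finally show ?thesis .
  qed
  have fin: "f t v \<in> tidx n p" if t: "t \<in> T" and v: "v \<in> V" for t v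
  proof -
    obtain i QQ where ti: "t = (i, QQ)" and i: "i \<in> A" and Pi: "QQ \<in> PiE V (\<lambda>_. P)"
      using t unfolding T_def by auto
    have perm: "QQ v permutes {..<p}" using Pi v unfolding P_def by auto
    have len: "length (sl i v) = p"
    proof -
      have "length (sl i v) = size (labels_at E ends i v)"
        unfolding sl_def by (metis mset_sorted_list_of_multiset size_mset)
      also have "\<dots> = mdegree E ends v" unfolding labels_at_def mdegree_def by simp
      finally show ?thesis using deg[OF v] by simp
    qed
    have setsl: "set (sl i v) \<subseteq> {..<n}"
    proof
      fix x assume "x \<in> set (sl i v)"
      then have "x \<in># labels_at E ends i v" unfolding sl_def by simp
      then obtain e where "e \<in> E" "x \<in># replicate_mset (count (ends e) v) (i e)"
        unfolding labels_at_def using fE by (auto simp: set_mset_sum)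
      then have "x = i e" "e \<in> E" by (auto split: if_splits)
      then show "x \<in> {..<n}" using i unfolding A_def by auto
    qed
    have "set (f t v) \<subseteq> {..<n}"
    proof
      fix y assume "y \<in> set (f t v)"
      then obtain k where k: "k < p" "y = sl i v ! QQ v k" unfolding f_def ti by auto
      have "QQ v k < p" using permutes_in_image[OF perm, of k] k by auto
      then have "y \<in> set (sl i v)" using k len by auto
      then show "y \<in> {..<n}" using setsl by auto
    qed
    moreover have "length (f t v) = p" unfolding f_def by simp
    ultimately show ?thesis unfolding tidx_def by auto
  qed
  have cT: "c^2 * real (card T) = real n ^ card E"
  proof -
    have "card T = (\<Sum>i\<in>A. card (PiE V (\<lambda>_. P)))" unfolding T_def
      using fA fV fP by (subst card_SigmaI) (auto intro: finite_PiE)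
    also have "\<dots> = card A * fact p ^ card V" using fV cP by (simp add: card_PiE)
    also have "card A = n ^ card E" unfolding A_def using fE by (simp add: card_PiE)
    finally have "card T = n ^ card E * fact p ^ card V" .
    moreover have "c^2 = (1 / fact p) ^ card V"
    proof -
      have a2: "a^2 = 1 / fact p" unfolding a_def by (simp add: power_divide)
      have "c^2 = (a^2) ^ card V" unfolding c_def
        by (metis power_mult mult.commute)
      then show ?thesis using a2 by simp
    qed
    ultimately show ?thesis by (simp add: power_divide)
  qed
  have "falling n (card E) \<le> c^2 * real (card T)" using falling_le cT by simp
  also have "\<dots> \<le> Var (PiM (tidx n p) (\<lambda>_. std_normal_distribution)) (\<lambda>x. \<Sum>t\<in>T. c * (\<Prod>v\<in>V. x (f t v)))"
    by (rule core[OF finite_tidx fT fV assms(2) fin])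
  also have "(\<lambda>x. \<Sum>t\<in>T. c * (\<Prod>v\<in>V. x (f t v))) = (\<lambda>G. mG n V E ends (wig p G))"
    using mGeq by simp
  finally show ?thesis unfolding gauss_tensor_def .
qed


end
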